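(* Let $\varepsilon>0$, let $\widetilde M_f,\widetilde M_g$ be as in the context, and let $\varphi:\widetilde M_f\to\widetilde M_g$ be the continuous map $\varphi=\phi_1\cup\cdots\cup\phi_{\eta_f}$ obtained from a leaf assignment whose path extensions agree pairwise at least common ancestors of leaves. For each pair of distinct leaves $(u_i,u_j)$ of $\widetilde M_f$ let $v=\mathrm{LCA}(u_i,u_j)$ and let $P_i,P_j$ be their leaf-to-root paths. Traversing downward from $v$ along $P_i$ and $P_j$, let $u_r\in P_i$ and $u_s\in P_j$ be the first pair of nodes such that (i) $\tilde f(u_r)=\tilde f(u_s)$ and (ii) $\tilde f(v)-\tilde f(u_r)>2\varepsilon$ (the $2\varepsilon$-pair of $(u_i,u_j)$, if it exists). Then $\varphi$ satisfies the Ancestor-Shift property (for all $x_1,x_2\in\widetilde M_f$, $\varphi(x_1)\succeq\varphi(x_2)$ implies $i^{2\varepsilon}(x_1)\succeq i^{2\varepsilon}(x_2)$) if and only if $\varphi(u_r)\neq\varphi(u_s)$ for every pair of distinct leaves $(u_i,u_j)$ of $\widetilde M_f$, where for a leaf pair whose $2\varepsilon$-pair does not exist the condition is regarded as satisfied.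
   Context: A finite merge tree is a finite rooted tree regarded as a topological space, with a continuous height function strictly increasing along each edge toward the root. Let $M_f$ (height $\tilde f$, root $r_f$) and $M_g$ (height $\tilde g$, root $r_g$) be finite merge trees with $\tilde g(r_g)=\tilde f(r_f)+\varepsilon$. Let $H=\{\tilde f(u): u \text{ a node of } M_f\}\cup\{\tilde g(w)-\varepsilon: w\text{ a node of } M_g\}$. $\widetilde M_f$ is obtained from $M_f$ by inserting a degree-two node at every point $x$ with $\tilde f(x)\in H$ not already a node; $\widetilde M_g$ from $M_g$ by inserting degree-two nodes at all points with $\tilde g$-value in $H+\varepsilon$ not already nodes. "Nodes" below refers to nodes of the augmented trees. Let $u_1,\dots,u_{\eta_f}$ be the leaves of $\widetilde M_f$, and $\phi$ assign to each $u_i$ a node $\phi(u_i)$ of $\widetilde M_g$ with $\tilde g(\phi(u_i))=\tilde f(u_i)+\varepsilon$. With $P_i$ the path from $u_i$ to the root of $\widetilde M_f$ and $P_i'$ that from $\phi(u_i)$ to the root of $\widetilde M_g$, $\phi_i:P_i\to P_i'$ sends $x$ to the unique point of $P_i'$ with $\tilde g$-value $\tilde f(x)+\varepsilon$; it is assumed $\phi_i(v)=\phi_j(v)$ for $v=\mathrm{LCA}(u_i,u_j)$ (lowest common ancestor) for all $i\neq j$, so $\varphi(x)=\phi_i(x)$ for $x\in P_i$ is well-defined. $a\succeq b$ means $a$ lies on the upward path from $b$. For the shift map, $\widetilde M_f$ is regarded as extended by an infinite ray above its root on which $\tilde f$ increases to $+\infty$, and $i^{2\varepsilon}(x)$ is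 the unique ancestor of $x$ with $\tilde f$-value $\tilde f(x)+2\varepsilon$. *)

theory Defs
  imports Complex_Main
begin

text \<open>The merge tree as a
topological space is the geometric realisation; its points are represented as
pairs (u, t): the point at height t on the edge from node u to its parent
(with h u \<le> t < h (parent u)), or the root point (root, h root).\<close>

record 'v mtree =
  nodes :: "'v set"
  par   :: "'v \<Rightarrow> 'v"
  rt    :: 'v
  ht    :: "'v \<Rightarrow> real"

definition merge_tree :: "'v mtree \<Rightarrow> bool" where
  "merge_tree T \<longleftrightarrow> finite (nodes T) \<and> rt T \<in> nodes T \<and> par T (rt T) = rt T \<and>
     (\<forall>u\<in>nodes T. u \<noteq> rt T \<longrightarrow> par T u \<in> nodes T \<and> ht T u < ht T (par T u)) \<and>
     (\<forall>u\<in>nodes T. \<exists>n. (par T ^^ n) u = rt T)"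

definition nanc :: "'v mtree \<Rightarrow> 'v \<Rightarrow> 'v \<Rightarrow> bool" where
  "nanc T u w \<longleftrightarrow> (\<exists>n. (par T ^^ n) w = u)"

definition point :: "'v mtree \<Rightarrow> 'v \<times> real \<Rightarrow> bool" where
  "point T p \<longleftrightarrow> fst p \<in> nodes T \<and> ht T (fst p) \<le> snd p \<and>
     (if fst p = rt T then snd p = ht T (fst p) else snd p < ht T (par T (fst p)))"

text \<open>points of the tree extended by an infinite ray above the root\<close>
definition xpoint :: "'v mtree \<Rightarrow> 'v \<times> real \<Rightarrow> bool" where
  "xpoint T p \<longleftrightarrow> fst p \<in> nodes T \<and> ht T (fst p) \<le> snd p \<and>
     (fst p \<noteq> rt T \<longrightarrow> snd p < ht T (par T (fst p)))"

definition above :: "'v mtree \<Rightarrow> 'v \<times> real \<Rightarrow> 'v \<times> real \<Rightarrow> bool" where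
  "above T a b \<longleftrightarrow> nanc T (fst a) (fst b) \<and> snd b \<le> snd a"

definition leaf :: "'v mtree \<Rightarrow> 'v \<times> real \<Rightarrow> bool" where
  "leaf T p \<longleftrightarrow> point T p \<and> (\<forall>q. point T q \<and> above T p q \<longrightarrow> q = p)"

definition aug_node :: "'v mtree \<Rightarrow> real set \<Rightarrow> 'v \<times> real \<Rightarrow> bool" where
  "aug_node T H p \<longleftrightarrow> point T p \<and> (snd p \<in> H \<or> (\<exists>u\<in>nodes T. p = (u, ht T u)))"

definition Hset :: "'v mtree \<Rightarrow> 'w mtree \<Rightarrow> real \<Rightarrow> real set" where
  "Hset f g \<epsilon> = ht f ` nodes f \<union> (\<lambda>x. x - \<epsilon>) ` (ht g ` nodes g)"

definition lca :: "'v mtree \<Rightarrow> 'v \<times> real \<Rightarrow> 'v \<times> real \<Rightarrow> 'v \<times> real" where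
  "lca T a b = (THE c. point T c \<and> above T c a \<and> above T c b \<and>
      (\<forall>d. point T d \<and> above T d a \<and> above T d b \<longrightarrow> above T d c))"

definition path_pt :: "'v mtree \<Rightarrow> 'v \<times> real \<Rightarrow> real \<Rightarrow> 'v \<times> real" where
  "path_pt T p c = (THE y. point T y \<and> above T y p \<and> snd y = c)"

definition varphi :: "'v mtree \<Rightarrow> 'w mtree \<Rightarrow> ('v \<times> real \<Rightarrow> 'w \<times> real) \<Rightarrow> real
    \<Rightarrow> 'v \<times> real \<Rightarrow> 'w \<times> real" where
  "varphi f g \<Phi> \<epsilon> x = path_pt g (\<Phi> (SOME u. leaf f u \<and> above f x u)) (snd x + \<epsilon>)"

definition shift :: "'v mtree \<Rightarrow> real \<Rightarrow> 'v \<times> real \<Rightarrow> 'v \<times> real" where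
  "shift T \<delta> x = (THE y. xpoint T y \<and> above T y x \<and> snd y = snd x + \<delta>)"

definition ancestor_shift :: "'v mtree \<Rightarrow> 'w mtree \<Rightarrow> ('v \<times> real \<Rightarrow> 'w \<times> real) \<Rightarrow> real \<Rightarrow> bool" where
  "ancestor_shift f g \<phi> \<epsilon> \<longleftrightarrow> (\<forall>x1 x2. point f x1 \<and> point f x2 \<and> above g (\<phi> x1) (\<phi> x2)
      \<longrightarrow> above f (shift f (2*\<epsilon>) x1) (shift f (2*\<epsilon>) x2))"

definition twoeps_pair :: "'v mtree \<Rightarrow> real set \<Rightarrow> real \<Rightarrow> 'v \<times> real \<Rightarrow> 'v \<times> real
    \<Rightarrow> 'v \<times> real \<Rightarrow> 'v \<times> real \<Rightarrow> bool" where
  "twoeps_pair f H \<epsilon> ui uj r s \<longleftrightarrow>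
     (let v = lca f ui uj;
          cand = (\<lambda>r s. aug_node f H r \<and> above f r ui \<and> aug_node f H s \<and> above f s uj \<and>
                        snd r = snd s \<and> snd v - snd r > 2*\<epsilon>)
      in cand r s \<and> (\<forall>r' s'. cand r' s' \<longrightarrow> snd r' \<le> snd r))"

end

theory Submission
  imports Defs
begin


lemma mt_par_node: "merge_tree T \<Longrightarrow> u \<in> nodes T \<Longrightarrow> par T u \<in> nodes T"
  unfolding merge_tree_def by (cases "u = rt T") auto

lemma mt_par_ht: "merge_tree T \<Longrightarrow> u \<in> nodes T \<Longrightarrow> u \<noteq> rt T \<Longrightarrow> ht T u < ht T (par T u)"
  unfolding merge_tree_def by auto

lemma mt_iter: "merge_tree T \<Longrightarrow> b \<in> nodes T \<Longrightarrow>
   (par T ^^ n) b \<in> nodes T \<and> ((par T ^^ n) b = b \<or> ht T b < ht T ((par T ^^ n) b))"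
proof (induction n)
  case 0 then show ?case by simp
next
  case (Suc n)
  let ?c = "(par T ^^ n) b"
  have c: "?c \<in> nodes T" "?c = b \<or> ht T b < ht T ?c" using Suc by auto
  show ?case
  proof (cases "?c = rt T")
    case True
    then have "(par T ^^ Suc n) b = ?c" using Suc.prems unfolding merge_tree_def by simp
    then show ?thesis using c by simp
  next
    case False
    then have "ht T ?c < ht T (par T ?c)" "par T ?c \<in> nodes T"
      using mt_par_ht mt_par_node Suc.prems c by auto
    then show ?thesis using c by auto
  qed
qed

lemma nanc_node: "merge_tree T \<Longrightarrow> nanc T a b \<Longrightarrow> b \<in> nodes T \<Longrightarrow> a \<in> nodes T"
proof -
  assume mt: "merge_tree T" and "nanc T a b" and b: "b \<in> nodes T"
  then obtain n where n: "(par T ^^ n) b = a" unfolding nanc_def by blast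
  show ?thesis using mt_iter[OF mt b, of n] unfolding n by blast
qed

lemma nanc_ht: "merge_tree T \<Longrightarrow> nanc T a b \<Longrightarrow> b \<in> nodes T \<Longrightarrow> ht T b \<le> ht T a"
proof -
  assume mt: "merge_tree T" and "nanc T a b" and b: "b \<in> nodes T"
  then obtain n where n: "(par T ^^ n) b = a" unfolding nanc_def by blast
  show ?thesis using mt_iter[OF mt b, of n] unfolding n by auto
qed

lemma nanc_ht_strict: "merge_tree T \<Longrightarrow> nanc T a b \<Longrightarrow> b \<in> nodes T \<Longrightarrow> a \<noteq> b \<Longrightarrow> ht T b < ht T a"
proof -
  assume mt: "merge_tree T" and "nanc T a b" and b: "b \<in> nodes T" and ne: "a \<noteq> b"
  then obtain n where n: "(par T ^^ n) b = a" unfolding nanc_def by blast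
  show ?thesis using mt_iter[OF mt b, of n] ne unfolding n by blast
qed

lemma nanc_refl: "nanc T a a"
  unfolding nanc_def by (metis funpow_0)

lemma nanc_trans: "nanc T a b \<Longrightarrow> nanc T b c \<Longrightarrow> nanc T a c"
proof -
  assume "nanc T a b" "nanc T b c"
  then obtain m n where m: "(par T ^^ m) b = a" and n: "(par T ^^ n) c = b" unfolding nanc_def by blast
  have "(par T ^^ (m + n)) c = a" using m n by (simp add: funpow_add)
  then show ?thesis unfolding nanc_def by blast
qed

lemma nanc_par: "nanc T (par T u) u"
proof -
  have "(par T ^^ 1) u = par T u" by simp
  then show ?thesis unfolding nanc_def by blast
qed

lemma nanc_antisym: "merge_tree T \<Longrightarrow> b \<in> nodes T \<Longrightarrow> nanc T a b \<Longrightarrow> nanc T b a \<Longrightarrow> a = b"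
proof (rule ccontr)
  assume mt: "merge_tree T" and b: "b \<in> nodes T" and ab: "nanc T a b" and ba: "nanc T b a" and ne: "a \<noteq> b"
  have a: "a \<in> nodes T" using nanc_node[OF mt ab b] .
  have "ht T b < ht T a" using nanc_ht_strict[OF mt ab b ne] .
  moreover have "ht T a < ht T b" using nanc_ht_strict[OF mt ba a] ne by auto
  ultimately show False by auto
qed

lemma iter_root: "merge_tree T \<Longrightarrow> (par T ^^ n) (rt T) = rt T"
  by (induction n) (auto simp: merge_tree_def)

lemma nanc_root: "merge_tree T \<Longrightarrow> nanc T a (rt T) \<Longrightarrow> a = rt T"
  unfolding nanc_def using iter_root by metis

lemma nanc_to_root: "merge_tree T \<Longrightarrow> u \<in> nodes T \<Longrightarrow> nanc T (rt T) u"
  unfolding nanc_def merge_tree_def by blast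

lemma nanc_cmp: "nanc T a w \<Longrightarrow> nanc T b w \<Longrightarrow> nanc T a b \<or> nanc T b a"
proof -
  assume "nanc T a w" "nanc T b w"
  then obtain m n where m: "(par T ^^ m) w = a" and n: "(par T ^^ n) w = b" unfolding nanc_def by blast
  show ?thesis
  proof (cases "m \<le> n")
    case True
    then have "n = (n - m) + m" by simp
    then have "(par T ^^ (n - m)) a = b" using m n
      by (metis comp_apply funpow_add)
    then show ?thesis unfolding nanc_def by blast
  next
    case False
    then have "m = (m - n) + n" by simp
    then have "(par T ^^ (m - n)) b = a" using m n
      by (metis comp_apply funpow_add)
    then show ?thesis unfolding nanc_def by blast
  qed
qed

lemma nanc_strict_par: "nanc T a b \<Longrightarrow> a \<noteq> b \<Longrightarrow> nanc T a (par T b)"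
proof -
  assume "nanc T a b" "a \<noteq> b"
  then obtain n where n: "(par T ^^ n) b = a" unfolding nanc_def by blast
  with \<open>a \<noteq> b\<close> obtain k where "n = Suc k" by (cases n) auto
  then have "(par T ^^ k) (par T b) = a" using n by (simp add: funpow_Suc_right del: funpow.simps)
  then show ?thesis unfolding nanc_def by blast
qed

lemma pointD: "point T p \<Longrightarrow> fst p \<in> nodes T \<and> ht T (fst p) \<le> snd p"
  unfolding point_def by blast
lemma point_rootD: "point T p \<Longrightarrow> fst p = rt T \<Longrightarrow> snd p = ht T (rt T)"
  unfolding point_def by (metis (full_types))
lemma point_nonrootD: "point T p \<Longrightarrow> fst p \<noteq> rt T \<Longrightarrow> snd p < ht T (par T (fst p))"
  unfolding point_def by (metis (full_types))
lemma pointI: "fst p \<in> nodes T \<Longrightarrow> ht T (fst p) \<le> snd p \<Longrightarrow> (fst p = rt T \<Longrightarrow> snd p = ht T (rt T))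
  \<Longrightarrow> (fst p \<noteq> rt T \<Longrightarrow> snd p < ht T (par T (fst p))) \<Longrightarrow> point T p"
  unfolding point_def by (metis (full_types))
lemma xpointD: "xpoint T p \<Longrightarrow> fst p \<in> nodes T \<and> ht T (fst p) \<le> snd p"
  unfolding xpoint_def by blast
lemma xpoint_nonrootD: "xpoint T p \<Longrightarrow> fst p \<noteq> rt T \<Longrightarrow> snd p < ht T (par T (fst p))"
  unfolding xpoint_def by blast
lemma xpointI: "fst p \<in> nodes T \<Longrightarrow> ht T (fst p) \<le> snd p
  \<Longrightarrow> (fst p \<noteq> rt T \<Longrightarrow> snd p < ht T (par T (fst p))) \<Longrightarrow> xpoint T p"
  unfolding xpoint_def by blast
lemma xpoint_of_point: "point T p \<Longrightarrow> xpoint T p"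
proof -
  assume p: "point T p"
  have 1: "fst p \<in> nodes T" "ht T (fst p) \<le> snd p" using pointD[OF p] by blast+
  show ?thesis by (rule xpointI[OF 1]) (rule point_nonrootD[OF p])
qed

lemma point_le_root: "merge_tree T \<Longrightarrow> point T p \<Longrightarrow> snd p \<le> ht T (rt T)"
proof -
  assume mt: "merge_tree T" and p: "point T p"
  show ?thesis
  proof (cases "fst p = rt T")
    case True then show ?thesis using point_rootD[OF p] by simp
  next
    case False
    have pn: "fst p \<in> nodes T" using pointD[OF p] by blast
    have 1: "snd p < ht T (par T (fst p))" using point_nonrootD[OF p False] .
    have 2: "par T (fst p) \<in> nodes T" using mt_par_node[OF mt pn] .
    have "ht T (par T (fst p)) \<le> ht T (rt T)"
      by (rule nanc_ht[OF mt nanc_to_root[OF mt 2] 2])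
    with 1 show ?thesis by linarith
  qed
qed

lemma xpoint_point: "xpoint T p \<Longrightarrow> snd p \<le> ht T (rt T) \<Longrightarrow> point T p"
proof -
  assume p: "xpoint T p" and le: "snd p \<le> ht T (rt T)"
  have 1: "fst p \<in> nodes T" "ht T (fst p) \<le> snd p" using xpointD[OF p] by blast+
  show ?thesis
  proof (rule pointI[OF 1])
    assume "fst p = rt T" then show "snd p = ht T (rt T)" using 1(2) le by simp
  next
    assume "fst p \<noteq> rt T" then show "snd p < ht T (par T (fst p))" using xpoint_nonrootD[OF p] by blast
  qed
qed

lemma xpoint_node: "xpoint T p \<Longrightarrow> fst p \<in> nodes T"
  by (rule xpointD[THEN conjunct1])

lemma point_node: "point T p \<Longrightarrow> fst p \<in> nodes T"
  by (rule pointD[THEN conjunct1])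

lemma above_refl: "above T a a" unfolding above_def by (simp add: nanc_refl)

lemma aboveD: "above T a b \<Longrightarrow> nanc T (fst a) (fst b) \<and> snd b \<le> snd a"
  unfolding above_def by assumption

lemma aboveI: "nanc T (fst a) (fst b) \<Longrightarrow> snd b \<le> snd a \<Longrightarrow> above T a b"
  unfolding above_def by (rule conjI)

lemma above_trans: "above T a b \<Longrightarrow> above T b c \<Longrightarrow> above T a c"
proof -
  assume ab: "above T a b" and bc: "above T b c"
  have 1: "nanc T (fst a) (fst c)" using aboveD[OF ab] aboveD[OF bc] by (intro nanc_trans[of T "fst a" "fst b" "fst c"]) simp_all
  have 2: "snd c \<le> snd a" using aboveD[OF ab] aboveD[OF bc] by linarith
  show ?thesis using aboveI[OF 1 2] .
qed

lemma above_antisym: "merge_tree T \<Longrightarrow> xpoint T a \<Longrightarrow> above T a b \<Longrightarrow> above T b a \<Longrightarrow> a = b"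
proof -
  assume mt: "merge_tree T" and a: "xpoint T a" and ab: "above T a b" and ba: "above T b a"
  have "fst b = fst a" using nanc_antisym[OF mt xpoint_node[OF a]] aboveD[OF ab] aboveD[OF ba] by blast
  moreover have "snd a = snd b" using aboveD[OF ab] aboveD[OF ba] by linarith
  ultimately show "a = b" by (metis prod.collapse)
qed

lemma chain: "merge_tree T \<Longrightarrow> xpoint T a \<Longrightarrow> xpoint T b \<Longrightarrow> above T a p \<Longrightarrow> above T b p
   \<Longrightarrow> snd a \<le> snd b \<Longrightarrow> above T b a"
proof -
  assume mt: "merge_tree T" and a: "xpoint T a" and b: "xpoint T b" and ap: "above T a p"
    and bp: "above T b p" and le: "snd a \<le> snd b"
  have cmp: "nanc T (fst a) (fst b) \<or> nanc T (fst b) (fst a)"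
    using nanc_cmp[of T "fst a" "fst p" "fst b"] aboveD[OF ap] aboveD[OF bp] by blast
  have False if n: "nanc T (fst a) (fst b)" and ne: "fst a \<noteq> fst b"
  proof -
    have "fst b \<noteq> rt T"
    proof
      assume "fst b = rt T"
      with n have "nanc T (fst a) (rt T)" by simp
      then have "fst a = rt T" using nanc_root[OF mt] by blast
      with ne \<open>fst b = rt T\<close> show False by simp
    qed
    then have 1: "snd b < ht T (par T (fst b))" using xpoint_nonrootD[OF b] by blast
    have "nanc T (fst a) (par T (fst b))" using nanc_strict_par[OF n ne] .
    then have 2: "ht T (par T (fst b)) \<le> ht T (fst a)"
      using nanc_ht[OF mt _ mt_par_node[OF mt xpoint_node[OF b]]] by blast
    have 3: "ht T (fst a) \<le> snd a" using xpointD[OF a] by blast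
    show False using 1 2 3 le by linarith
  qed
  then have "nanc T (fst b) (fst a)"
  proof (cases "fst a = fst b")
    case True then show ?thesis using nanc_refl[of T "fst a"] by simp
  next
    case False then show ?thesis using cmp \<open>nanc T (fst a) (fst b) \<Longrightarrow> fst a \<noteq> fst b \<Longrightarrow> False\<close> by blast
  qed
  then show ?thesis using aboveI le by blast
qed



lemma mt_finite: "merge_tree T \<Longrightarrow> finite (nodes T)"
  unfolding merge_tree_def by blast

lemma exists_anc: "merge_tree T \<Longrightarrow> xpoint T p \<Longrightarrow> snd p \<le> c \<Longrightarrow>
   \<exists>y. xpoint T y \<and> above T y p \<and> snd y = c"
proof -
  assume mt: "merge_tree T" and p: "xpoint T p" and pc: "snd p \<le> c"
  define A where "A = {w \<in> nodes T. nanc T w (fst p) \<and> ht T w \<le> c}"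
  have finA: "finite A" unfolding A_def using mt_finite[OF mt] by simp
  have pA: "fst p \<in> A" unfolding A_def using xpointD[OF p] pc nanc_refl[of T "fst p"] by auto
  define m where "m = Max (ht T ` A)"
  have "m \<in> ht T ` A" unfolding m_def using finA pA by (intro Max_in) auto
  then obtain w where wA: "w \<in> A" and wm: "ht T w = m" by auto
  have wmax: "ht T w' \<le> ht T w" if "w' \<in> A" for w'
    unfolding wm m_def using finA that by (intro Max_ge) auto
  have w: "w \<in> nodes T" "nanc T w (fst p)" "ht T w \<le> c" using wA unfolding A_def by auto
  have "xpoint T (w, c)"
  proof (rule xpointI)
    show "fst (w, c) \<in> nodes T" using w by simp
    show "ht T (fst (w, c)) \<le> snd (w, c)" using w by simp
    assume "fst (w, c) \<noteq> rt T"
    then have nr: "w \<noteq> rt T" by simp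
    show "snd (w, c) < ht T (par T (fst (w, c)))"
    proof (rule ccontr)
      assume "\<not> snd (w, c) < ht T (par T (fst (w, c)))"
      then have le: "ht T (par T w) \<le> c" by simp
      have pn: "par T w \<in> nodes T" using mt_par_node[OF mt w(1)] .
      have "nanc T (par T w) (fst p)" using nanc_trans[OF nanc_par w(2)] .
      then have "par T w \<in> A" unfolding A_def using pn le by simp
      then have "ht T (par T w) \<le> ht T w" by (rule wmax)
      moreover have "ht T w < ht T (par T w)" using mt_par_ht[OF mt w(1) nr] .
      ultimately show False by linarith
    qed
  qed
  moreover have "above T (w, c) p" by (rule aboveI) (use w pc in simp_all)
  ultimately show ?thesis by (intro exI[of _ "(w, c)"]) simp
qed

lemma pp_eq: "merge_tree T \<Longrightarrow> point T y \<Longrightarrow> above T y p \<Longrightarrow> snd y = c \<Longrightarrow> path_pt T p c = y"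
  unfolding path_pt_def
proof (rule the_equality)
  assume mt: "merge_tree T" and y: "point T y" and yp: "above T y p" and yc: "snd y = c"
  show "point T y \<and> above T y p \<and> snd y = c" using y yp yc by blast
  fix y' assume h: "point T y' \<and> above T y' p \<and> snd y' = c"
  then have y': "point T y'" "above T y' p" "snd y' = c" by blast+
  have l1: "snd y' \<le> snd y" "snd y \<le> snd y'" using y'(3) yc by simp_all
  have 1: "above T y y'" using chain[OF mt xpoint_of_point[OF y'(1)] xpoint_of_point[OF y] y'(2) yp l1(1)] .
  have 2: "above T y' y" using chain[OF mt xpoint_of_point[OF y] xpoint_of_point[OF y'(1)] yp y'(2) l1(2)] .
  show "y' = y" using above_antisym[OF mt xpoint_of_point[OF y] 1 2] by simp
qed

lemma pp_props: "merge_tree T \<Longrightarrow> point T p \<Longrightarrow> snd p \<le> c \<Longrightarrow> c \<le> ht T (rt T) \<Longrightarrow>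
  point T (path_pt T p c) \<and> above T (path_pt T p c) p \<and> snd (path_pt T p c) = c"
proof -
  assume mt: "merge_tree T" and p: "point T p" and pc: "snd p \<le> c" and cr: "c \<le> ht T (rt T)"
  obtain y where y: "xpoint T y" "above T y p" "snd y = c" using exists_anc[OF mt xpoint_of_point[OF p] pc] by blast
  have yp: "point T y" using xpoint_point[OF y(1)] y(3) cr by simp
  have "path_pt T p c = y" using pp_eq[OF mt yp y(2) y(3)] .
  then show ?thesis using yp y by simp
qed

lemma shift_eq: "merge_tree T \<Longrightarrow> xpoint T y \<Longrightarrow> above T y x \<Longrightarrow> snd y = snd x + d \<Longrightarrow> shift T d x = y"
  unfolding shift_def
proof (rule the_equality)
  assume mt: "merge_tree T" and y: "xpoint T y" and yp: "above T y x" and yc: "snd y = snd x + d"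
  show "xpoint T y \<and> above T y x \<and> snd y = snd x + d" using y yp yc by blast
  fix y' assume h: "xpoint T y' \<and> above T y' x \<and> snd y' = snd x + d"
  then have y': "xpoint T y'" "above T y' x" "snd y' = snd x + d" by blast+
  have l1: "snd y' \<le> snd y" "snd y \<le> snd y'" using y'(3) yc by simp_all
  have 1: "above T y y'" using chain[OF mt y'(1) y y'(2) yp l1(1)] .
  have 2: "above T y' y" using chain[OF mt y y'(1) yp y'(2) l1(2)] .
  show "y' = y" using above_antisym[OF mt y 1 2] by simp
qed

lemma shift_props: "merge_tree T \<Longrightarrow> xpoint T x \<Longrightarrow> 0 \<le> d \<Longrightarrow>
  xpoint T (shift T d x) \<and> above T (shift T d x) x \<and> snd (shift T d x) = snd x + d"
proof -
  assume mt: "merge_tree T" and p: "xpoint T x" and d: "0 \<le> d"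
  obtain y where y: "xpoint T y" "above T y x" "snd y = snd x + d" using exists_anc[OF mt p, of "snd x + d"] d by auto
  have "shift T d x = y" using shift_eq[OF mt y] .
  then show ?thesis using y by simp
qed

lemma leafD: "leaf T u \<Longrightarrow> point T u"
  unfolding leaf_def by blast

lemma leafD2: "leaf T u \<Longrightarrow> point T q \<Longrightarrow> above T u q \<Longrightarrow> q = u"
  unfolding leaf_def by blast

lemma leaf_props: "merge_tree T \<Longrightarrow> leaf T u \<Longrightarrow> point T u \<and> fst u \<in> nodes T \<and> snd u = ht T (fst u)"
proof -
  assume mt: "merge_tree T" and l: "leaf T u"
  have u: "point T u" using leafD[OF l] .
  have un: "fst u \<in> nodes T" "ht T (fst u) \<le> snd u" using pointD[OF u] by blast+
  define q where "q = (fst u, ht T (fst u))"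
  have "point T q"
  proof (rule pointI)
    show "fst q \<in> nodes T" using un unfolding q_def by simp
    show "ht T (fst q) \<le> snd q" unfolding q_def by simp
    show "snd q = ht T (rt T)" if "fst q = rt T" using that unfolding q_def by simp
    show "snd q < ht T (par T (fst q))" if "fst q \<noteq> rt T"
      using that point_nonrootD[OF u] un unfolding q_def by simp
  qed
  moreover have "above T u q" by (rule aboveI) (use un nanc_refl in \<open>simp_all add: q_def\<close>)
  ultimately have "q = u" using leafD2[OF l] by blast
  then have "snd u = ht T (fst u)" unfolding q_def by (metis snd_conv)
  then show ?thesis using u un by blast
qed

lemma leaf_below: "merge_tree T \<Longrightarrow> point T x \<Longrightarrow> \<exists>u. leaf T u \<and> above T x u"
proof -
  assume mt: "merge_tree T" and x: "point T x"
  define A where "A = {w \<in> nodes T. nanc T (fst x) w}"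
  have finA: "finite A" unfolding A_def using mt_finite[OF mt] by simp
  have xn: "fst x \<in> nodes T" "ht T (fst x) \<le> snd x" using pointD[OF x] by blast+
  have pA: "fst x \<in> A" unfolding A_def using xn nanc_refl[of T "fst x"] by auto
  define m where "m = Min (ht T ` A)"
  have "m \<in> ht T ` A" unfolding m_def using finA pA by (intro Min_in) auto
  then obtain w where wA: "w \<in> A" and wm: "ht T w = m" by auto
  have wmin: "ht T w \<le> ht T w'" if "w' \<in> A" for w'
    unfolding wm m_def using finA that by (intro Min_le) auto
  have w: "w \<in> nodes T" "nanc T (fst x) w" using wA unfolding A_def by auto
  define u where "u = (w, ht T w)"
  have up: "point T u"
  proof (rule pointI)
    show "fst u \<in> nodes T" using w unfolding u_def by simp
    show "ht T (fst u) \<le> snd u" unfolding u_def by simp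
    show "snd u = ht T (rt T)" if "fst u = rt T" using that unfolding u_def by simp
    show "snd u < ht T (par T (fst u))" if "fst u \<noteq> rt T"
      using that mt_par_ht[OF mt w(1)] unfolding u_def by simp
  qed
  have "ht T w \<le> ht T (fst x)" using nanc_ht[OF mt w(2) w(1)] .
  then have xu: "above T x u" by (intro aboveI) (use w xn in \<open>simp_all add: u_def\<close>)
  have "leaf T u" unfolding leaf_def
  proof (intro conjI allI impI)
    show "point T u" using up .
    fix q assume h: "point T q \<and> above T u q"
    then have "above T u q" by blast
    then have "nanc T (fst u) (fst q) \<and> snd q \<le> snd u" by (rule aboveD)
    then have q: "point T q" "nanc T w (fst q)" "snd q \<le> ht T w" using h unfolding u_def by auto
    have qn: "fst q \<in> nodes T" "ht T (fst q) \<le> snd q" using pointD[OF q(1)] by blast+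
    have "nanc T (fst x) (fst q)" using nanc_trans[OF w(2) q(2)] .
    then have "fst q \<in> A" unfolding A_def using qn by simp
    then have "ht T w \<le> ht T (fst q)" by (rule wmin)
    have fq: "fst q = w"
    proof (rule ccontr)
      assume "fst q \<noteq> w"
      then have "ht T (fst q) < ht T w" using nanc_ht_strict[OF mt q(2) qn(1)] by simp
      then show False using \<open>ht T w \<le> ht T (fst q)\<close> by linarith
    qed
    have "snd q = ht T w" using qn q(3) fq \<open>ht T w \<le> ht T (fst q)\<close> by simp
    then show "q = u" unfolding u_def using fq by (metis prod.collapse)
  qed
  then show ?thesis using xu by blast
qed

lemma below_par: "merge_tree T \<Longrightarrow> point T a \<Longrightarrow> nanc T w (fst a) \<Longrightarrow> w \<noteq> rt T \<Longrightarrow> snd a < ht T (par T w)"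
proof -
  assume mt: "merge_tree T" and a: "point T a" and wa: "nanc T w (fst a)" and wr: "w \<noteq> rt T"
  have an: "fst a \<in> nodes T" using point_node[OF a] .
  have wn: "w \<in> nodes T" using nanc_node[OF mt wa an] .
  have ar: "fst a \<noteq> rt T"
  proof
    assume "fst a = rt T"
    then have "nanc T w (rt T)" using wa by simp
    then show False using nanc_root[OF mt] wr by blast
  qed
  have 1: "snd a < ht T (par T (fst a))" using point_nonrootD[OF a ar] .
  show ?thesis
  proof (cases "w = fst a")
    case True then show ?thesis using 1 by simp
  next
    case False
    have "nanc T w (par T (fst a))" using nanc_strict_par[OF wa False] .
    then have "ht T (par T (fst a)) \<le> ht T w" using nanc_ht[OF mt _ mt_par_node[OF mt an]] by blast
    moreover have "ht T w < ht T (par T w)" using mt_par_ht[OF mt wn wr] .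
    ultimately show ?thesis using 1 by linarith
  qed
qed



lemma lca_props: "merge_tree T \<Longrightarrow> point T a \<Longrightarrow> point T b \<Longrightarrow>
  point T (lca T a b) \<and> above T (lca T a b) a \<and> above T (lca T a b) b \<and>
  (\<forall>d. point T d \<and> above T d a \<and> above T d b \<longrightarrow> above T d (lca T a b)) \<and>
  (\<exists>w\<in>nodes T. snd (lca T a b) = max (ht T w) (max (snd a) (snd b)))"
proof -
  assume mt: "merge_tree T" and a: "point T a" and b: "point T b"
  have an: "fst a \<in> nodes T" using point_node[OF a] .
  have bn: "fst b \<in> nodes T" using point_node[OF b] .
  define N where "N = {w \<in> nodes T. nanc T w (fst a) \<and> nanc T w (fst b)}"
  have finN: "finite N" unfolding N_def using mt_finite[OF mt] by simp
  have rN: "rt T \<in> N" unfolding N_def using nanc_to_root[OF mt an] nanc_to_root[OF mt bn]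
    mt unfolding merge_tree_def by blast
  define m where "m = Min (ht T ` N)"
  have "m \<in> ht T ` N" unfolding m_def using finN rN by (intro Min_in) auto
  then obtain w0 where wN: "w0 \<in> N" and wm: "ht T w0 = m" by auto
  have wmin: "ht T w0 \<le> ht T w'" if "w' \<in> N" for w'
    unfolding wm m_def using finN that by (intro Min_le) auto
  have w0: "w0 \<in> nodes T" "nanc T w0 (fst a)" "nanc T w0 (fst b)" using wN unfolding N_def by auto
  define c where "c = (w0, max (ht T w0) (max (snd a) (snd b)))"
  have cp: "point T c"
  proof (rule pointI)
    show "fst c \<in> nodes T" using w0 unfolding c_def by simp
    show "ht T (fst c) \<le> snd c" unfolding c_def by simp
    show "snd c = ht T (rt T)" if "fst c = rt T"
    proof -
      have "w0 = rt T" using that unfolding c_def by simp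
      moreover have "snd a \<le> ht T (rt T)" "snd b \<le> ht T (rt T)"
        using point_le_root[OF mt a] point_le_root[OF mt b] by auto
      ultimately show ?thesis unfolding c_def by simp
    qed
    show "snd c < ht T (par T (fst c))" if "fst c \<noteq> rt T"
    proof -
      have wr: "w0 \<noteq> rt T" using that unfolding c_def by simp
      have "ht T w0 < ht T (par T w0)" using mt_par_ht[OF mt w0(1) wr] .
      moreover have "snd a < ht T (par T w0)" using below_par[OF mt a w0(2) wr] .
      moreover have "snd b < ht T (par T w0)" using below_par[OF mt b w0(3) wr] .
      ultimately show ?thesis unfolding c_def by simp
    qed
  qed
  have ca: "above T c a" by (rule aboveI) (use w0 in \<open>simp_all add: c_def\<close>)
  have cb: "above T c b" by (rule aboveI) (use w0 in \<open>simp_all add: c_def\<close>)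
  have cmin: "above T d c" if d: "point T d" "above T d a" "above T d b" for d
  proof -
    have dn: "fst d \<in> nodes T" "ht T (fst d) \<le> snd d" using pointD[OF d(1)] by blast+
    have da: "nanc T (fst d) (fst a) \<and> snd a \<le> snd d" using aboveD[OF d(2)] .
    have db: "nanc T (fst d) (fst b) \<and> snd b \<le> snd d" using aboveD[OF d(3)] .
    have "fst d \<in> N" unfolding N_def using dn da db by simp
    then have hm: "ht T w0 \<le> ht T (fst d)" by (rule wmin)
    have "nanc T (fst d) w0"
    proof (rule ccontr)
      assume nd: "\<not> nanc T (fst d) w0"
      then have "nanc T w0 (fst d)" using nanc_cmp[of T "fst d" "fst a" w0] da w0(2) by blast
      moreover have "w0 \<noteq> fst d" using nd nanc_refl[of T w0] by auto
      ultimately have "ht T (fst d) < ht T w0" using nanc_ht_strict[OF mt _ dn(1)] by blast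
      then show False using hm by linarith
    qed
    moreover have "snd c \<le> snd d" unfolding c_def using hm dn da db by simp
    ultimately show ?thesis by (intro aboveI) (simp_all add: c_def)
  qed
  have "lca T a b = c" unfolding lca_def
  proof (rule the_equality)
    show "point T c \<and> above T c a \<and> above T c b \<and>
      (\<forall>d. point T d \<and> above T d a \<and> above T d b \<longrightarrow> above T d c)" using cp ca cb cmin by blast
    fix x assume h: "point T x \<and> above T x a \<and> above T x b \<and>
      (\<forall>d. point T d \<and> above T d a \<and> above T d b \<longrightarrow> above T d x)"
    then have 1: "above T c x" using cp ca cb by blast
    have 2: "above T x c" using h cmin by blast
    show "x = c" using above_antisym[OF mt xpoint_of_point[OF cp] 1 2] by simp
  qed
  then show ?thesis using cp ca cb cmin w0(1) unfolding c_def by auto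
qed



theorem theorem4p8:
  fixes f :: "'v mtree" and g :: "'w mtree" and \<epsilon> :: real
    and \<Phi> :: "'v \<times> real \<Rightarrow> 'w \<times> real"
  assumes "\<epsilon> > 0"
    and "merge_tree f" and "merge_tree g"
    and "ht g (rt g) = ht f (rt f) + \<epsilon>"
    and "\<forall>u. leaf f u \<longrightarrow>
           aug_node g ((\<lambda>x. x + \<epsilon>) ` Hset f g \<epsilon>) (\<Phi> u) \<and> snd (\<Phi> u) = snd u + \<epsilon>"
    and "\<forall>ui uj. leaf f ui \<and> leaf f uj \<and> ui \<noteq> uj \<longrightarrow>
           path_pt g (\<Phi> ui) (snd (lca f ui uj) + \<epsilon>) = path_pt g (\<Phi> uj) (snd (lca f ui uj) + \<epsilon>)"
  shows "ancestor_shift f g (varphi f g \<Phi> \<epsilon>) \<epsilon> \<longleftrightarrow>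
    (\<forall>ui uj r s. leaf f ui \<and> leaf f uj \<and> ui \<noteq> uj \<and> twoeps_pair f (Hset f g \<epsilon>) \<epsilon> ui uj r s
        \<longrightarrow> varphi f g \<Phi> \<epsilon> r \<noteq> varphi f g \<Phi> \<epsilon> s)"
proof -
  have ep: "\<epsilon> > 0" using assms(1) .
  have mf: "merge_tree f" using assms(2) .
  have mg: "merge_tree g" using assms(3) .
  have rr: "ht g (rt g) = ht f (rt f) + \<epsilon>" using assms(4) .
  define \<phi> where "\<phi> = varphi f g \<Phi> \<epsilon>"
  have \<Phi>p: "point g (\<Phi> u) \<and> snd (\<Phi> u) = snd u + \<epsilon>" if "leaf f u" for u
    using assms(5) that unfolding aug_node_def by blast
  have bounds: "snd (\<Phi> u) \<le> snd x + \<epsilon> \<and> snd x + \<epsilon> \<le> ht g (rt g)"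
    if x: "point f x" and u: "leaf f u" and xu: "above f x u" for x u
  proof -
    have "snd u \<le> snd x" using aboveD[OF xu] by blast
    moreover have "snd x \<le> ht f (rt f)" using point_le_root[OF mf x] .
    ultimately show ?thesis using \<Phi>p[OF u] rr by simp
  qed
  have V: "\<phi> x = path_pt g (\<Phi> u) (snd x + \<epsilon>)"
    if x: "point f x" and u: "leaf f u" and xu: "above f x u" for x u
  proof -
    obtain u0 where "leaf f u0 \<and> above f x u0" using leaf_below[OF mf x] by blast
    define u' where "u' = (SOME u. leaf f u \<and> above f x u)"
    have u': "leaf f u' \<and> above f x u'" unfolding u'_def by (rule someI) fact
    have e1: "\<phi> x = path_pt g (\<Phi> u') (snd x + \<epsilon>)" unfolding \<phi>_def varphi_def u'_def by simp
    show ?thesis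
    proof (cases "u' = u")
      case True then show ?thesis using e1 by simp
    next
      case False
      have u'l: "leaf f u'" and xu': "above f x u'" using u' by blast+
      have pu: "point f u" using leafD[OF u] .
      have pu': "point f u'" using leafD[OF u'l] .
      define v where "v = lca f u' u"
      have vp: "point f v" "above f v u'" "above f v u"
        "\<forall>d. point f d \<and> above f d u' \<and> above f d u \<longrightarrow> above f d v"
        using lca_props[OF mf pu' pu] unfolding v_def by blast+
      have cons: "path_pt g (\<Phi> u') (snd v + \<epsilon>) = path_pt g (\<Phi> u) (snd v + \<epsilon>)"
        using assms(6) u'l u False unfolding v_def by blast
      have "above f x v" using vp(4) x xu' xu by blast
      then have vx: "snd v \<le> snd x" using aboveD by blast
      define z where "z = path_pt g (\<Phi> u) (snd v + \<epsilon>)"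
      have bz: "snd (\<Phi> u) \<le> snd v + \<epsilon> \<and> snd v + \<epsilon> \<le> ht g (rt g)" by (rule bounds[OF vp(1) u vp(3)])
      have bz': "snd (\<Phi> u') \<le> snd v + \<epsilon> \<and> snd v + \<epsilon> \<le> ht g (rt g)" by (rule bounds[OF vp(1) u'l vp(2)])
      have z1: "point g z \<and> above g z (\<Phi> u) \<and> snd z = snd v + \<epsilon>"
        unfolding z_def using pp_props[OF mg conjunct1[OF \<Phi>p[OF u]]] bz by blast
      have z2: "above g z (\<Phi> u')"
        unfolding z_def cons[symmetric] using pp_props[OF mg conjunct1[OF \<Phi>p[OF u'l]]] bz' by blast
      define y where "y = path_pt g z (snd x + \<epsilon>)"
      have "snd x + \<epsilon> \<le> ht g (rt g)" using bounds[OF x u xu] by blast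
      then have y: "point g y \<and> above g y z \<and> snd y = snd x + \<epsilon>"
        unfolding y_def using pp_props[OF mg conjunct1[OF z1]] z1 vx by simp
      have "path_pt g (\<Phi> u') (snd x + \<epsilon>) = y"
        using pp_eq[OF mg conjunct1[OF y] above_trans[OF conjunct1[OF conjunct2[OF y]] z2]] y by blast
      moreover have "path_pt g (\<Phi> u) (snd x + \<epsilon>) = y"
        using pp_eq[OF mg conjunct1[OF y] above_trans[OF conjunct1[OF conjunct2[OF y]] conjunct1[OF conjunct2[OF z1]]]] y by blast
      ultimately show ?thesis using e1 by simp
    qed
  qed
  have Vp: "point g (\<phi> x) \<and> above g (\<phi> x) (\<Phi> u) \<and> snd (\<phi> x) = snd x + \<epsilon>"
    if x: "point f x" and u: "leaf f u" and xu: "above f x u" for x u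
    unfolding V[OF x u xu] using pp_props[OF mg conjunct1[OF \<Phi>p[OF u]]] bounds[OF x u xu] by blast
  show ?thesis
    unfolding \<phi>_def[symmetric]
  proof
    assume AS: "ancestor_shift f g \<phi> \<epsilon>"
    show "\<forall>ui uj r s. leaf f ui \<and> leaf f uj \<and> ui \<noteq> uj \<and> twoeps_pair f (Hset f g \<epsilon>) \<epsilon> ui uj r s
        \<longrightarrow> \<phi> r \<noteq> \<phi> s"
    proof (intro allI impI)
      fix ui uj r s
      assume H: "leaf f ui \<and> leaf f uj \<and> ui \<noteq> uj \<and> twoeps_pair f (Hset f g \<epsilon>) \<epsilon> ui uj r s"
      define v where "v = lca f ui uj"
      have tp: "twoeps_pair f (Hset f g \<epsilon>) \<epsilon> ui uj r s" using H by blast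
      then have c: "aug_node f (Hset f g \<epsilon>) r" "above f r ui" "aug_node f (Hset f g \<epsilon>) s" "above f s uj"
        "snd r = snd s" "snd v - snd r > 2*\<epsilon>"
        unfolding twoeps_pair_def Let_def v_def by blast+
      have rp: "point f r" using c(1) unfolding aug_node_def by blast
      have sp: "point f s" using c(3) unfolding aug_node_def by blast
      have ui: "leaf f ui" and uj: "leaf f uj" using H by blast+
      have vp: "point f v" "\<forall>d. point f d \<and> above f d ui \<and> above f d uj \<longrightarrow> above f d v"
        using lca_props[OF mf leafD[OF ui] leafD[OF uj]] unfolding v_def by blast+
      show "\<phi> r \<noteq> \<phi> s"
      proof
        assume eq: "\<phi> r = \<phi> s"
        have a1: "above f (shift f (2*\<epsilon>) r) (shift f (2*\<epsilon>) s)"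
          using AS rp sp above_refl[of g "\<phi> s"] eq unfolding ancestor_shift_def by metis
        have a2: "above f (shift f (2*\<epsilon>) s) (shift f (2*\<epsilon>) r)"
          using AS rp sp above_refl[of g "\<phi> s"] eq unfolding ancestor_shift_def by metis
        have sr: "xpoint f (shift f (2*\<epsilon>) r) \<and> above f (shift f (2*\<epsilon>) r) r \<and> snd (shift f (2*\<epsilon>) r) = snd r + 2*\<epsilon>"
          using shift_props[OF mf xpoint_of_point[OF rp]] ep by simp
        have ss: "xpoint f (shift f (2*\<epsilon>) s) \<and> above f (shift f (2*\<epsilon>) s) s"
          using shift_props[OF mf xpoint_of_point[OF sp]] ep by simp
        have same: "shift f (2*\<epsilon>) r = shift f (2*\<epsilon>) s"
          using above_antisym[OF mf conjunct1[OF sr] a1 a2] .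
        define y where "y = shift f (2*\<epsilon>) r"
        have y1: "above f y ui" unfolding y_def using above_trans[OF conjunct1[OF conjunct2[OF sr]] c(2)] .
        have y2: "above f y uj" unfolding y_def same using above_trans[OF conjunct2[OF ss] c(4)] .
        have "snd v \<le> ht f (rt f)" using point_le_root[OF mf vp(1)] .
        then have "snd y \<le> ht f (rt f)" unfolding y_def using sr c(6) by simp
        then have yp: "point f y" using xpoint_point[OF conjunct1[OF sr[folded y_def]]] by simp
        have "above f y v" using vp(2) yp y1 y2 by blast
        then have "snd v \<le> snd y" using aboveD by blast
        then show False unfolding y_def using sr c(6) by simp
      qed
    qed
  next
    assume R: "\<forall>ui uj r s. leaf f ui \<and> leaf f uj \<and> ui \<noteq> uj \<and> twoeps_pair f (Hset f g \<epsilon>) \<epsilon> ui uj r s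
        \<longrightarrow> \<phi> r \<noteq> \<phi> s"
    show "ancestor_shift f g \<phi> \<epsilon>" unfolding ancestor_shift_def
    proof (intro allI impI)
      fix x1 x2 assume hx: "point f x1 \<and> point f x2 \<and> above g (\<phi> x1) (\<phi> x2)"
      have x1: "point f x1" and x2: "point f x2" and a12: "above g (\<phi> x1) (\<phi> x2)" using hx by blast+
      define h where "h = snd x1"
      obtain ui where ui: "leaf f ui" "above f x1 ui" using leaf_below[OF mf x1] by blast
      obtain uj where uj: "leaf f uj" "above f x2 uj" using leaf_below[OF mf x2] by blast
      have p1: "point g (\<phi> x1) \<and> above g (\<phi> x1) (\<Phi> ui) \<and> snd (\<phi> x1) = snd x1 + \<epsilon>" using Vp[OF x1 ui] .
      have p2: "point g (\<phi> x2) \<and> above g (\<phi> x2) (\<Phi> uj) \<and> snd (\<phi> x2) = snd x2 + \<epsilon>" using Vp[OF x2 uj] .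
      have x2h: "snd x2 \<le> h" using aboveD[OF a12] p1 p2 unfolding h_def by simp
      have p1j: "above g (\<phi> x1) (\<Phi> uj)" using above_trans[OF a12] p2 by blast
      have uih: "snd ui \<le> h" using aboveD[OF ui(2)] unfolding h_def by blast
      have ujh: "snd uj \<le> h" using aboveD[OF uj(2)] x2h by simp
      have lui: "point f ui \<and> fst ui \<in> nodes f \<and> snd ui = ht f (fst ui)" using leaf_props[OF mf ui(1)] .
      have luj: "point f uj \<and> fst uj \<in> nodes f \<and> snd uj = ht f (fst uj)" using leaf_props[OF mf uj(1)] .
      define y1 where "y1 = shift f (2*\<epsilon>) x1"
      define y2 where "y2 = shift f (2*\<epsilon>) x2"
      have sy1: "xpoint f y1 \<and> above f y1 x1 \<and> snd y1 = snd x1 + 2*\<epsilon>"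
        unfolding y1_def using shift_props[OF mf xpoint_of_point[OF x1]] ep by simp
      have sy2: "xpoint f y2 \<and> above f y2 x2 \<and> snd y2 = snd x2 + 2*\<epsilon>"
        unfolding y2_def using shift_props[OF mf xpoint_of_point[OF x2]] ep by simp
      show "above f y1 y2" unfolding y1_def[symmetric] y2_def[symmetric]
      proof (rule ccontr)
        assume nab: "\<not> above f y1 y2"
        define v where "v = lca f ui uj"
        have vp: "point f v" "above f v ui" "above f v uj"
          "\<forall>d. point f d \<and> above f d ui \<and> above f d uj \<longrightarrow> above f d v"
          using lca_props[OF mf conjunct1[OF lui] conjunct1[OF luj]] unfolding v_def by blast+
        have hv: "snd v > h + 2*\<epsilon>"
        proof (rule ccontr)
          assume "\<not> snd v > h + 2*\<epsilon>"
          then have le: "snd v \<le> h + 2*\<epsilon>" by simp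
          obtain y where y: "xpoint f y" "above f y v" "snd y = h + 2*\<epsilon>"
            using exists_anc[OF mf xpoint_of_point[OF vp(1)] le] by blast
          have yui: "above f y ui" using above_trans[OF y(2) vp(2)] .
          have yuj: "above f y uj" using above_trans[OF y(2) vp(3)] .
          have "snd x1 \<le> snd y" using y(3) ep unfolding h_def by simp
          then have "above f y x1" using chain[OF mf xpoint_of_point[OF x1] y(1) ui(2) yui] by blast
          then have "y1 = y" unfolding y1_def using shift_eq[OF mf y(1)] y(3) unfolding h_def by blast
          have "snd x2 \<le> snd y" using y(3) ep x2h by simp
          then have yx2: "above f y x2" using chain[OF mf xpoint_of_point[OF x2] y(1) uj(2) yuj] by blast
          have "snd y2 \<le> snd y" using sy2 y(3) x2h by simp
          then have "above f y y2" using chain[OF mf conjunct1[OF sy2] y(1) conjunct1[OF conjunct2[OF sy2]] yx2] by blast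
          then show False using nab \<open>y1 = y\<close> by simp
        qed
        have neq: "ui \<noteq> uj"
        proof
          assume "ui = uj"
          then have "above f ui v" using vp(4) lui above_refl[of f ui] by blast
          then have "snd v \<le> snd ui" using aboveD by blast
          then show False using hv uih ep by simp
        qed
        define H where "H = Hset f g \<epsilon>"
        have finH: "finite H" unfolding H_def Hset_def using mt_finite[OF mf] mt_finite[OF mg] by simp
        have Hf: "ht f w \<in> H" if "w \<in> nodes f" for w
          unfolding H_def Hset_def using that by (intro UnI1 imageI)
        have Hg: "ht g w - \<epsilon> \<in> H" if "w \<in> nodes g" for w
          unfolding H_def Hset_def using that by (intro UnI2 imageI)
        define m0 where "m0 = max (snd ui) (snd uj)"
        have m0H: "m0 \<in> H" unfolding m0_def using Hf lui luj by (simp add: max_def)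
        define K where "K = {t \<in> H. m0 \<le> t \<and> snd v - t > 2*\<epsilon>}"
        have finK: "finite K" unfolding K_def using finH by simp
        have m0K: "m0 \<in> K" unfolding K_def using m0H hv uih ujh unfolding m0_def by simp
        define ts where "ts = Max K"
        have tsK: "ts \<in> K" unfolding ts_def using finK m0K by (intro Max_in) auto
        have tsmax: "t \<le> ts" if "t \<in> K" for t unfolding ts_def using finK that by (intro Max_ge) auto
        have ts: "ts \<in> H" "m0 \<le> ts" "snd v - ts > 2*\<epsilon>" using tsK unfolding K_def by auto
        have vr: "snd v \<le> ht f (rt f)" using point_le_root[OF mf vp(1)] .
        define r where "r = path_pt f ui ts"
        define s where "s = path_pt f uj ts"
        have r: "point f r \<and> above f r ui \<and> snd r = ts"
          unfolding r_def using pp_props[OF mf conjunct1[OF lui]] ts vr ep unfolding m0_def by simp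
        have s: "point f s \<and> above f s uj \<and> snd s = ts"
          unfolding s_def using pp_props[OF mf conjunct1[OF luj]] ts vr ep unfolding m0_def by simp
        have tw: "twoeps_pair f H \<epsilon> ui uj r s"
          unfolding twoeps_pair_def Let_def v_def[symmetric]
        proof (intro conjI allI impI)
          show "aug_node f H r" unfolding aug_node_def using r ts by simp
          show "aug_node f H s" unfolding aug_node_def using s ts by simp
          show "above f r ui" using r by blast
          show "above f s uj" using s by blast
          show "snd r = snd s" using r s by simp
          show "snd v - snd r > 2*\<epsilon>" using r ts by simp
          fix r' s'
          assume cr: "aug_node f H r' \<and> above f r' ui \<and> aug_node f H s' \<and> above f s' uj \<and>
                        snd r' = snd s' \<and> snd v - snd r' > 2*\<epsilon>"
          have "snd r' \<in> H"
          proof -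
            have "point f r' \<and> (snd r' \<in> H \<or> (\<exists>u\<in>nodes f. r' = (u, ht f u)))"
              using cr unfolding aug_node_def by blast
            then show ?thesis using Hf by auto
          qed
          moreover have "snd ui \<le> snd r'" using cr aboveD by blast
          moreover have "snd uj \<le> snd r'" using cr aboveD[of f s' uj] by auto
          ultimately have "snd r' \<in> K" unfolding K_def m0_def using cr by simp
          then show "snd r' \<le> snd r" using tsmax r by simp
        qed
        have ne: "\<phi> r \<noteq> \<phi> s" using R ui(1) uj(1) neq tw unfolding H_def by blast
        have \<phi>r: "\<phi> r = path_pt g (\<Phi> ui) (ts + \<epsilon>)" using V[OF conjunct1[OF r] ui(1)] r by simp
        have \<phi>s: "\<phi> s = path_pt g (\<Phi> uj) (ts + \<epsilon>)" using V[OF conjunct1[OF s] uj(1)] s by simp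
        have Pi: "point g (\<Phi> ui) \<and> snd (\<Phi> ui) = snd ui + \<epsilon>" using \<Phi>p[OF ui(1)] .
        have Pj: "point g (\<Phi> uj) \<and> snd (\<Phi> uj) = snd uj + \<epsilon>" using \<Phi>p[OF uj(1)] .
        define M where "M = lca g (\<Phi> ui) (\<Phi> uj)"
        have Mp: "point g M" "above g M (\<Phi> ui)" "above g M (\<Phi> uj)"
          "\<forall>d. point g d \<and> above g d (\<Phi> ui) \<and> above g d (\<Phi> uj) \<longrightarrow> above g d M"
          "\<exists>w\<in>nodes g. snd M = max (ht g w) (max (snd (\<Phi> ui)) (snd (\<Phi> uj)))"
          using lca_props[OF mg conjunct1[OF Pi] conjunct1[OF Pj]] unfolding M_def by blast+
        have "above g (\<phi> x1) M" using Mp(4) p1 p1j by blast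
        then have "snd M \<le> snd (\<phi> x1)" using aboveD by blast
        then have Mh: "snd M \<le> h + \<epsilon>" using p1 unfolding h_def by simp
        have Mi: "snd ui + \<epsilon> \<le> snd M" using aboveD[OF Mp(2)] Pi by simp
        have Mj: "snd uj + \<epsilon> \<le> snd M" using aboveD[OF Mp(3)] Pj by simp
        have "snd M - \<epsilon> \<in> H"
        proof -
          obtain w where w: "w \<in> nodes g" "snd M = max (ht g w) (max (snd (\<Phi> ui)) (snd (\<Phi> uj)))"
            using Mp(5) by blast
          have "snd M = ht g w \<or> snd M = snd ui + \<epsilon> \<or> snd M = snd uj + \<epsilon>"
            using w(2) Pi Pj by (simp add: max_def split: if_splits)
          then show ?thesis using Hg[OF w(1)] Hf lui luj by auto
        qed
        then have "snd M - \<epsilon> \<in> K" unfolding K_def m0_def using Mi Mj Mh hv by simp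
        then have Mts: "snd M \<le> ts + \<epsilon>" using tsmax by fastforce
        have "ts + \<epsilon> \<le> ht g (rt g)" using rr ts vr ep by simp
        then have z: "point g (path_pt g M (ts + \<epsilon>)) \<and> above g (path_pt g M (ts + \<epsilon>)) M
            \<and> snd (path_pt g M (ts + \<epsilon>)) = ts + \<epsilon>"
          using pp_props[OF mg Mp(1) Mts] by blast
        have "path_pt g (\<Phi> ui) (ts + \<epsilon>) = path_pt g M (ts + \<epsilon>)"
          using pp_eq[OF mg conjunct1[OF z] above_trans[OF conjunct1[OF conjunct2[OF z]] Mp(2)]] z by blast
        moreover have "path_pt g (\<Phi> uj) (ts + \<epsilon>) = path_pt g M (ts + \<epsilon>)"
          using pp_eq[OF mg conjunct1[OF z] above_trans[OF conjunct1[OF conjunct2[OF z]] Mp(3)]] z by blast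
        ultimately show False using ne \<phi>r \<phi>s by simp
      qed
    qed
  qed
qed


end
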